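(* Let $G=(m,n,\boldsymbol{c},\boldsymbol{d},r_{\max},r_{\min})$ be an interbank lending game. Then the continuous-time best-response dynamics $$\frac{ds_i(t)}{dt}=\hat s_i(t)-s_i(t),\qquad \hat s_i(t)\in\mathrm{BR}_i(\boldsymbol{s}(t)),\qquad i\in L,$$ converges to the unique pure Nash equilibrium $\boldsymbol{s}^*$ of $G$ from any initial state $\boldsymbol{s}(0)\in\boldsymbol{S}$, i.e. $\boldsymbol{s}(t)\to\boldsymbol{s}^*$ as $t\to\infty$.
   Context: An interbank lending game $G=(m,n,\boldsymbol{c},\boldsymbol{d},r_{\max},r_{\min})$ consists of positive integers $m,n$, budgets $\boldsymbol{c}\in\mathbb{R}_{>0}^m$, demands $\boldsymbol{d}\in\mathbb{R}_{>0}^n$ and reals $0<r_{\min}<r_{\max}$. The players are the lenders $L=\{1,\dots,m\}$; $B=\{1,\dots,n\}$ is the set of borrowers. Lender $i$'s strategy set is $S_i=\{s_i\in\mathbb{R}_{\ge0}^n:\sum_{j\in B}s_{ij}\le c_i\}$, the strategy space is $\boldsymbol{S}=\prod_{i\in L}S_i$ with elements $\boldsymbol{s}=(s_{ij})$. The interest rate of borrower $j$ is $r_j(\boldsymbol{s})=(r_{\min}-r_{\max})\frac{\sum_{i\in L}s_{ij}}{d_j}+r_{\max}$ and lender $i$'s utility is $u_i(\boldsymbol{s})=\sum_{j\in B}(r_j(\boldsymbol{s})-r_{\min})s_{ij}$. A pure Nash equilibrium is $\boldsymbol{s}^*\in\boldsymbol{S}$ with $u_i(\boldsymbol{s}^*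 )\ge u_i(s_i,\boldsymbol{s}^*_{-i})$ for all $i\in L$, $s_i\in S_i$; $G$ has exactly one. Lender $i$'s best-response set at $\boldsymbol{s}$ is $\mathrm{BR}_i(\boldsymbol{s})=\arg\max\{u_i(z_i,\boldsymbol{s}_{-i}):z_i\in S_i\}$; in these games it is a singleton for every $\boldsymbol{s}\in\boldsymbol{S}$, so the dynamics above is an ordinary differential equation. *)

theory Defs
  imports "HOL-Analysis.Analysis"
begin

text \<open>Lenders are indexed by the finite type 'm (so m = CARD('m)),
borrowers by the finite type 'n (n = CARD('n)). A strategy profile is a matrix
s :: real^'n^'m with s $ i $ j the amount lender i lends to borrower j.
The game data are c (budgets), d (demands), rmax, rmin.\<close>

definition strat_set :: "real^'m \<Rightarrow> 'm \<Rightarrow> (real^'n) set" where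
  "strat_set c i = {si. (\<forall>j. si $ j \<ge> 0) \<and> (\<Sum>j\<in>UNIV. si $ j) \<le> c $ i}"

definition strat_space :: "real^'m \<Rightarrow> (real^'n^'m) set" where
  "strat_space c = {s. \<forall>i. s $ i \<in> strat_set c i}"

definition rate :: "real^'n \<Rightarrow> real \<Rightarrow> real \<Rightarrow> real^'n^'m \<Rightarrow> 'n \<Rightarrow> real" where
  "rate d rmax rmin s j = (rmin - rmax) * (\<Sum>i\<in>UNIV. s $ i $ j) / d $ j + rmax"

definition utility :: "real^'n \<Rightarrow> real \<Rightarrow> real \<Rightarrow> real^'n^'m \<Rightarrow> 'm \<Rightarrow> real" where
  "utility d rmax rmin s i = (\<Sum>j\<in>UNIV. (rate d rmax rmin s j - rmin) * s $ i $ j)"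

definition replace_strat :: "real^'n^'m \<Rightarrow> 'm \<Rightarrow> real^'n \<Rightarrow> real^'n^'m" where
  "replace_strat s i z = (\<chi> k. if k = i then z else s $ k)"

definition is_pure_NE :: "real^'m \<Rightarrow> real^'n \<Rightarrow> real \<Rightarrow> real \<Rightarrow> real^'n^'m \<Rightarrow> bool" where
  "is_pure_NE c d rmax rmin s \<longleftrightarrow> s \<in> strat_space c \<and>
     (\<forall>i. \<forall>z\<in>strat_set c i.
        utility d rmax rmin s i \<ge> utility d rmax rmin (replace_strat s i z) i)"

definition best_resp :: "real^'m \<Rightarrow> real^'n \<Rightarrow> real \<Rightarrow> real \<Rightarrow> 'm \<Rightarrow> real^'n^'m \<Rightarrow> (real^'n) set" where
  "best_resp c d rmax rmin i s = {z \<in> strat_set c i. \<forall>z'\<in>strat_set c i.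
      utility d rmax rmin (replace_strat s i z) i \<ge> utility d rmax rmin (replace_strat s i z') i}"

end

theory Submission
  imports Defs "HOL-Real_Asymp.Real_Asymp"
begin


definition TT :: "real^'n^'m \<Rightarrow> 'n \<Rightarrow> real" where
  "TT x j = (\<Sum>i\<in>UNIV. x$i$j)"
definition gg :: "real^'n \<Rightarrow> real^'n^'m \<Rightarrow> 'm \<Rightarrow> 'n \<Rightarrow> real" where
  "gg d x i j = 1 - (TT x j + x$i$j) / d$j"
definition Pot :: "real^'n \<Rightarrow> real^'n^'m \<Rightarrow> real" where
  "Pot d x = (\<Sum>j\<in>UNIV. TT x j - ((\<Sum>i\<in>UNIV. (x$i$j)^2) + (TT x j)^2) / (2 * d$j))"
definition Rd :: "real^'n \<Rightarrow> real^'n^'m \<Rightarrow> real^'n^'m \<Rightarrow> real" where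
  "Rd d x y = (\<Sum>j\<in>UNIV. ((\<Sum>i\<in>UNIV. (y$i$j - x$i$j)^2) + (TT y j - TT x j)^2) / d$j)"
definition Qd :: "real^'n \<Rightarrow> real^'n^'m \<Rightarrow> real^'n^'m \<Rightarrow> real" where
  "Qd d x y = (\<Sum>i\<in>UNIV. \<Sum>j\<in>UNIV. (y$i$j - x$i$j)^2 / d$j)"
definition lin :: "real^'n \<Rightarrow> real^'n^'m \<Rightarrow> real^'n^'m \<Rightarrow> real" where
  "lin d x y = (\<Sum>i\<in>UNIV. \<Sum>j\<in>UNIV. gg d x i j * (y$i$j - x$i$j))"

lemma Pot_expand:
  fixes d :: "real^'n::finite" and x y :: "real^'n^'m::finite"
  assumes d_pos: "\<forall>j. d $ j > 0"
  shows "Pot d y = Pot d x + lin d x y - Rd d x y / 2"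
proof -
  have j: "TT y j - ((\<Sum>i\<in>UNIV. (y$i$j)^2) + (TT y j)^2) / (2 * d$j)
     = TT x j - ((\<Sum>i\<in>UNIV. (x$i$j)^2) + (TT x j)^2) / (2 * d$j)
       + (\<Sum>i\<in>UNIV. gg d x i j * (y$i$j - x$i$j))
       - ((\<Sum>i\<in>UNIV. (y$i$j - x$i$j)^2) + (TT y j - TT x j)^2) / d$j / 2" for j
  proof -
    have dj: "d$j > 0" using d_pos by auto
    have s1: "(\<Sum>i\<in>UNIV. (y$i$j)^2) = (\<Sum>i\<in>UNIV. (x$i$j)^2) + 2 * (\<Sum>i\<in>UNIV. x$i$j * (y$i$j - x$i$j)) + (\<Sum>i\<in>UNIV. (y$i$j - x$i$j)^2)"
      by (simp add: sum.distrib[symmetric] sum_distrib_left power2_eq_square algebra_simps)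
    have s2: "(\<Sum>i\<in>UNIV. gg d x i j * (y$i$j - x$i$j)) = (TT y j - TT x j) - (TT x j * (TT y j - TT x j) + (\<Sum>i\<in>UNIV. x$i$j * (y$i$j - x$i$j))) / d$j"
      using dj unfolding gg_def TT_def
      by (simp add: sum_subtractf sum_divide_distrib[symmetric] sum_distrib_left sum.distrib algebra_simps diff_divide_distrib add_divide_distrib)
    show ?thesis unfolding s1 s2 using dj by (simp add: field_simps power2_eq_square)
  qed
  have L: "lin d x y = (\<Sum>j\<in>UNIV. \<Sum>i\<in>UNIV. gg d x i j * (y$i$j - x$i$j))"
    unfolding lin_def by (rule sum.swap)
  have "Pot d y = (\<Sum>j\<in>UNIV. (TT x j - ((\<Sum>i\<in>UNIV. (x$i$j)^2) + (TT x j)^2) / (2 * d$j))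
       + (\<Sum>i\<in>UNIV. gg d x i j * (y$i$j - x$i$j))
       - ((\<Sum>i\<in>UNIV. (y$i$j - x$i$j)^2) + (TT y j - TT x j)^2) / d$j / 2)"
    unfolding Pot_def by (rule sum.cong[OF refl j])
  also have "\<dots> = Pot d x + lin d x y - Rd d x y / 2"
    unfolding L Pot_def Rd_def by (simp only: sum.distrib sum_subtractf sum_divide_distrib)
  finally show ?thesis .
qed

definition phi :: "real^'n \<Rightarrow> real^'n^'m \<Rightarrow> 'm \<Rightarrow> real^'n \<Rightarrow> real" where
  "phi d x i z = (\<Sum>j\<in>UNIV. gg d x i j * (z$j - x$i$j)) - (\<Sum>j\<in>UNIV. (z$j - x$i$j)^2 / d$j)"

lemma replace_nth: "replace_strat x i z $ k $ j = (if k = i then z $ j else x $ k $ j)"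
  by (simp add: replace_strat_def)

lemma TT_replace:
  fixes x :: "real^'n::finite^'m::finite"
  shows "TT (replace_strat x i z) j = TT x j - x$i$j + z$j"
proof -
  have "TT (replace_strat x i z) j = (\<Sum>k\<in>UNIV. x$k$j + (if k = i then z$j - x$i$j else 0))"
    unfolding TT_def replace_nth by (rule sum.cong) auto
  also have "\<dots> = TT x j + (z$j - x$i$j)" by (simp add: sum.distrib TT_def)
  finally show ?thesis by simp
qed

lemma utility_replace:
  fixes d :: "real^'n::finite" and x :: "real^'n^'m::finite"
  assumes d_pos: "\<forall>j. d $ j > 0"
  shows "utility d rmax rmin (replace_strat x i z) i - utility d rmax rmin x i = (rmax - rmin) * phi d x i z"
proof -
  have j: "(rate d rmax rmin (replace_strat x i z) j - rmin) * replace_strat x i z $ i $ j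
     - (rate d rmax rmin x j - rmin) * x $ i $ j
     = (rmax - rmin) * (gg d x i j * (z$j - x$i$j) - (z$j - x$i$j)^2 / d$j)" for j
  proof -
    have dj: "d$j > 0" using d_pos by auto
    have r1: "rate d rmax rmin (replace_strat x i z) j = (rmin - rmax) * (TT x j - x$i$j + z$j) / d $ j + rmax"
      using TT_replace[of x i z j] unfolding rate_def TT_def by simp
    have r2: "rate d rmax rmin x j = (rmin - rmax) * TT x j / d $ j + rmax"
      unfolding rate_def TT_def ..
    show ?thesis unfolding r1 r2 gg_def replace_nth using dj
      by (simp add: field_simps power2_eq_square)
  qed
  have "utility d rmax rmin (replace_strat x i z) i - utility d rmax rmin x i
     = (\<Sum>j\<in>UNIV. (rmax - rmin) * (gg d x i j * (z$j - x$i$j) - (z$j - x$i$j)^2 / d$j))"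
    unfolding utility_def sum_subtractf[symmetric] by (rule sum.cong[OF refl j])
  also have "\<dots> = (rmax - rmin) * phi d x i z"
    unfolding phi_def right_diff_distrib sum_distrib_left sum_subtractf by (simp add: sum_subtractf)
  finally show ?thesis .
qed

lemma Pot_replace:
  fixes d :: "real^'n::finite" and x :: "real^'n^'m::finite"
  assumes d_pos: "\<forall>j. d $ j > 0"
  shows "Pot d (replace_strat x i z) - Pot d x = phi d x i z"
proof -
  have l: "lin d x (replace_strat x i z) = (\<Sum>j\<in>UNIV. gg d x i j * (z$j - x$i$j))"
  proof -
    have "lin d x (replace_strat x i z) = (\<Sum>k\<in>UNIV. if k = i then (\<Sum>j\<in>UNIV. gg d x i j * (z$j - x$i$j)) else 0)"
      unfolding lin_def replace_nth by (rule sum.cong) auto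
    then show ?thesis by simp
  qed
  have r: "Rd d x (replace_strat x i z) = 2 * (\<Sum>j\<in>UNIV. (z$j - x$i$j)^2 / d$j)"
  proof -
    have "Rd d x (replace_strat x i z) = (\<Sum>j\<in>UNIV. 2 * ((z$j - x$i$j)^2 / d$j))"
    proof (unfold Rd_def, rule sum.cong[OF refl])
      fix j
      have "(\<Sum>k\<in>UNIV. (replace_strat x i z $ k $ j - x $ k $ j)\<^sup>2) = (\<Sum>k\<in>UNIV. if k = i then (z$j - x$i$j)^2 else 0)"
        unfolding replace_nth by (rule sum.cong) auto
      then show "((\<Sum>k\<in>UNIV. (replace_strat x i z $ k $ j - x $ k $ j)\<^sup>2) +
          (TT (replace_strat x i z) j - TT x j)\<^sup>2) / d $ j = 2 * ((z $ j - x $ i $ j)\<^sup>2 / d $ j)"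
        unfolding TT_replace by simp
    qed
    then show ?thesis by (simp add: sum_distrib_left)
  qed
  show ?thesis using Pot_expand[OF d_pos, of "replace_strat x i z" x] unfolding l r phi_def by simp
qed

lemma Qd_nonneg:
  fixes d :: "real^'n::finite" and x y :: "real^'n^'m::finite"
  assumes d_pos: "\<forall>j. d $ j > 0"
  shows "Qd d x y \<ge> 0"
  unfolding Qd_def using d_pos by (intro sum_nonneg) (simp add: less_imp_le)

lemma Qd_sym: "Qd d x y = Qd d y x"
  unfolding Qd_def by (simp add: power2_commute)

lemma Qd_le_Rd:
  fixes d :: "real^'n::finite" and x y :: "real^'n^'m::finite"
  assumes d_pos: "\<forall>j. d $ j > 0"
  shows "Qd d x y \<le> Rd d x y"
proof -
  have "Qd d x y = (\<Sum>j\<in>UNIV. (\<Sum>i\<in>UNIV. (y$i$j - x$i$j)^2) / d$j)"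
    unfolding Qd_def by (subst sum.swap) (simp add: sum_divide_distrib)
  also have "\<dots> \<le> Rd d x y" unfolding Rd_def
    using d_pos by (intro sum_mono divide_right_mono) (auto simp: less_imp_le)
  finally show ?thesis .
qed

lemma Qd_comp:
  fixes d :: "real^'n::finite" and x y :: "real^'n^'m::finite"
  assumes d_pos: "\<forall>j. d $ j > 0"
  shows "(y$i$j - x$i$j)^2 \<le> d$j * Qd d x y"
proof -
  have dj: "d$j > 0" using d_pos by auto
  have "(y$i$j - x$i$j)^2 / d$j \<le> (\<Sum>j'\<in>UNIV. (y$i$j' - x$i$j')^2 / d$j')"
    by (rule member_le_sum) (use d_pos in \<open>auto simp: less_imp_le\<close>)
  also have "\<dots> \<le> Qd d x y" unfolding Qd_def
    by (rule member_le_sum[where f="\<lambda>i. \<Sum>j'\<in>UNIV. (y$i$j' - x$i$j')^2 / d$j'"])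
       (use d_pos in \<open>auto intro!: sum_nonneg simp: less_imp_le\<close>)
  finally show ?thesis using dj by (simp add: field_simps)
qed

lemma strat_set_convex:
  assumes "y \<in> strat_set c i" "z \<in> strat_set c i" "0 \<le> \<theta>" "\<theta> \<le> 1"
  shows "y + \<theta> *\<^sub>R (z - y) \<in> strat_set c i"
proof -
  have e: "(y + \<theta> *\<^sub>R (z - y)) $ j = (1 - \<theta>) * y$j + \<theta> * z$j" for j
    by (simp add: algebra_simps)
  have "(\<Sum>j\<in>UNIV. (1 - \<theta>) * y$j + \<theta> * z$j) = (1 - \<theta>) * (\<Sum>j\<in>UNIV. y$j) + \<theta> * (\<Sum>j\<in>UNIV. z$j)"
    by (simp add: sum.distrib sum_distrib_left)
  also have "\<dots> \<le> (1 - \<theta>) * c$i + \<theta> * c$i"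
    using assms by (intro add_mono mult_left_mono) (auto simp: strat_set_def)
  also have "\<dots> = c$i" by (simp add: algebra_simps)
  finally have S: "(\<Sum>j\<in>UNIV. (1 - \<theta>) * y$j + \<theta> * z$j) \<le> c$i" .
  have N: "\<forall>j. 0 \<le> (1 - \<theta>) * y$j + \<theta> * z$j"
    using assms by (auto simp: strat_set_def intro!: add_nonneg_nonneg mult_nonneg_nonneg)
  show ?thesis unfolding strat_set_def mem_Collect_eq e using S N by blast
qed

lemma phi_comb:
  "phi d x i (x$i + \<theta> *\<^sub>R (z - x$i)) = \<theta> * (\<Sum>j\<in>UNIV. gg d x i j * (z$j - x$i$j)) - \<theta>^2 * (\<Sum>j\<in>UNIV. (z$j - x$i$j)^2 / d$j)"
proof -
  have a: "(\<Sum>j\<in>UNIV. gg d x i j * ((x$i + \<theta> *\<^sub>R (z - x$i))$j - x$i$j)) = \<theta> * (\<Sum>j\<in>UNIV. gg d x i j * (z$j - x$i$j))"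
    by (simp add: sum_distrib_left algebra_simps)
  have "(\<Sum>j\<in>UNIV. ((x$i + \<theta> *\<^sub>R (z - x$i))$j - x$i$j)^2 / d$j) = (\<Sum>j\<in>UNIV. \<theta>^2 * ((z$j - x$i$j)^2 / d$j))"
    by (rule sum.cong) (simp_all add: power2_eq_square algebra_simps)
  then have b: "(\<Sum>j\<in>UNIV. ((x$i + \<theta> *\<^sub>R (z - x$i))$j - x$i$j)^2 / d$j) = \<theta>^2 * (\<Sum>j\<in>UNIV. (z$j - x$i$j)^2 / d$j)"
    by (simp add: sum_distrib_left)
  show ?thesis unfolding phi_def a b ..
qed

lemma small_theta:
  fixes A B :: real
  assumes "\<forall>\<theta>. 0 < \<theta> \<and> \<theta> \<le> 1 \<longrightarrow> A \<le> \<theta> * B"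
  shows "A \<le> 0"
proof (rule ccontr)
  assume "\<not> A \<le> 0"
  then have A: "A > 0" by simp
  then have B: "B > 0" using assms[rule_format, of 1] by simp
  define t where "t = min 1 (A / (2 * B))"
  have t: "0 < t" "t \<le> 1" using A B by (auto simp: t_def)
  have "A \<le> t * B" using assms t by blast
  also have "\<dots> \<le> A / (2 * B) * B" using B by (intro mult_right_mono) (auto simp: t_def)
  also have "\<dots> = A / 2" using B by simp
  finally show False using A by simp
qed

lemma NE_VI:
  fixes d :: "real^'n::finite" and x :: "real^'n^'m::finite"
  assumes d_pos: "\<forall>j. d $ j > 0" and lt: "rmin < rmax"
    and ne: "is_pure_NE c d rmax rmin x" and z: "z \<in> strat_set c i"
  shows "(\<Sum>j\<in>UNIV. gg d x i j * (z$j - x$i$j)) \<le> 0"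
proof (rule small_theta, intro allI impI)
  fix \<theta> :: real assume th: "0 < \<theta> \<and> \<theta> \<le> 1"
  have xi: "x$i \<in> strat_set c i" using ne by (auto simp: is_pure_NE_def strat_space_def)
  have "x$i + \<theta> *\<^sub>R (z - x$i) \<in> strat_set c i"
    using strat_set_convex[OF xi z] th by auto
  then have "utility d rmax rmin (replace_strat x i (x$i + \<theta> *\<^sub>R (z - x$i))) i - utility d rmax rmin x i \<le> 0"
    using ne by (auto simp: is_pure_NE_def)
  then have "(rmax - rmin) * phi d x i (x$i + \<theta> *\<^sub>R (z - x$i)) \<le> 0"
    using utility_replace[OF d_pos] by metis
  then have "phi d x i (x$i + \<theta> *\<^sub>R (z - x$i)) \<le> 0"
    using lt by (simp add: mult_le_0_iff)
  then have "\<theta> * (\<Sum>j\<in>UNIV. gg d x i j * (z$j - x$i$j)) \<le> \<theta> * (\<theta> * (\<Sum>j\<in>UNIV. (z$j - x$i$j)^2 / d$j))"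
    unfolding phi_comb by (simp add: power2_eq_square algebra_simps)
  then show "(\<Sum>j\<in>UNIV. gg d x i j * (z$j - x$i$j)) \<le> \<theta> * (\<Sum>j\<in>UNIV. (z$j - x$i$j)^2 / d$j)"
    using th by simp
qed

lemma NE_lin:
  fixes d :: "real^'n::finite" and x :: "real^'n^'m::finite"
  assumes d_pos: "\<forall>j. d $ j > 0" and lt: "rmin < rmax"
    and ne: "is_pure_NE c d rmax rmin x" and y: "y \<in> strat_space c"
  shows "lin d x y \<le> 0"
  unfolding lin_def
  by (rule sum_nonpos, rule NE_VI[OF d_pos lt ne]) (use y in \<open>auto simp: strat_space_def\<close>)

lemma NE_unique:
  fixes d :: "real^'n::finite" and x :: "real^'n^'m::finite"
  assumes d_pos: "\<forall>j. d $ j > 0" and lt: "rmin < rmax"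
    and nx: "is_pure_NE c d rmax rmin x" and ny: "is_pure_NE c d rmax rmin y"
  shows "y = x"
proof -
  have xs: "x \<in> strat_space c" and ys: "y \<in> strat_space c" using nx ny by (auto simp: is_pure_NE_def)
  have "Rd d x y + Rd d y x \<le> 0"
    using Pot_expand[OF d_pos, of y x] Pot_expand[OF d_pos, of x y]
      NE_lin[OF d_pos lt nx ys] NE_lin[OF d_pos lt ny xs] by linarith
  then have q: "Qd d x y \<le> 0"
    using Qd_le_Rd[OF d_pos, of x y] Qd_le_Rd[OF d_pos, of y x] Qd_sym[of d x y] Qd_nonneg[OF d_pos, of y x]
    by linarith
  have "y$i$j = x$i$j" for i j
  proof -
    have "(y$i$j - x$i$j)^2 \<le> 0" using Qd_comp[OF d_pos, of y i j x] q d_pos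
      by (smt (verit) mult_nonneg_nonpos)
    then show ?thesis by simp
  qed
  then show ?thesis by (simp add: vec_eq_iff)
qed

lemma strat_space_closed: "closed (strat_space (c::real^'m::finite) :: (real^'n::finite^'m) set)"
proof -
  have "strat_space c = (\<Inter>i. (\<Inter>j. {s::real^'n^'m. 0 \<le> s$i$j}) \<inter> {s. (\<Sum>j\<in>UNIV. s$i$j) \<le> c$i})"
    by (auto simp: strat_space_def strat_set_def)
  also have "closed \<dots>"
    by (auto intro!: closed_INT closed_Int closed_Collect_le continuous_intros)
  finally show ?thesis .
qed

lemma strat_space_bounded: "bounded (strat_space (c::real^'m::finite) :: (real^'n::finite^'m) set)"
proof -
  have "norm s \<le> (\<Sum>i\<in>UNIV. \<bar>c$i\<bar>)" if s: "s \<in> strat_space c" for s :: "real^'n^'m"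
  proof -
    have "norm s \<le> (\<Sum>i\<in>UNIV. norm (s$i))" 
      unfolding norm_vec_def by (rule L2_set_le_sum) simp
    also have "\<dots> \<le> (\<Sum>i\<in>UNIV. \<bar>c$i\<bar>)"
    proof (rule sum_mono)
      fix i
      have "norm (s$i) \<le> (\<Sum>j\<in>UNIV. \<bar>s$i$j\<bar>)" by (rule norm_le_l1_cart)
      also have "\<dots> = (\<Sum>j\<in>UNIV. s$i$j)" using s by (simp add: strat_space_def strat_set_def)
      also have "\<dots> \<le> c$i" using s by (simp add: strat_space_def strat_set_def)
      also have "\<dots> \<le> \<bar>c$i\<bar>" by simp
      finally show "norm (s$i) \<le> \<bar>c$i\<bar>" .
    qed
    finally show ?thesis .
  qed
  then show ?thesis unfolding bounded_iff by blast
qed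

lemma NE_exists:
  fixes c :: "real^'m::finite" and d :: "real^'n::finite"
  assumes c_pos: "\<forall>i. c $ i > 0" and d_pos: "\<forall>j. d $ j > 0" and lt: "rmin < rmax"
  shows "\<exists>x. is_pure_NE c d rmax rmin x"
proof -
  have ne: "(0::real^'n^'m) \<in> strat_space c" using c_pos by (auto simp: strat_space_def strat_set_def less_imp_le)
  have dne: "\<forall>j. d$j \<noteq> 0" using d_pos by (metis less_irrefl)
  have cont: "continuous_on (strat_space c) (Pot d :: real^'n^'m \<Rightarrow> real)"
    unfolding Pot_def TT_def by (intro continuous_intros) (use dne in auto)
  obtain x where x: "x \<in> strat_space c" and mx: "\<forall>y\<in>strat_space c. Pot d y \<le> Pot d x"
    using continuous_attains_sup[OF compact_eq_bounded_closed[THEN iffD2, OF conjI[OF strat_space_bounded strat_space_closed]] _ cont] ne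
    by blast
  have "is_pure_NE c d rmax rmin x" unfolding is_pure_NE_def
  proof (intro conjI x allI ballI)
    fix i and z :: "real^'n" assume z: "z \<in> strat_set c i"
    have "replace_strat x i z \<in> strat_space c" using x z
      by (auto simp: strat_space_def replace_strat_def)
    then have "phi d x i z \<le> 0" using mx Pot_replace[OF d_pos, of x i z] by force
    then have "(rmax - rmin) * phi d x i z \<le> 0" using lt by (simp add: mult_nonneg_nonpos)
    then show "utility d rmax rmin (replace_strat x i z) i \<le> utility d rmax rmin x i"
      using utility_replace[OF d_pos, of rmax rmin x i z] by linarith
  qed
  then show ?thesis ..
qed



lemma decay:
  fixes w w' :: "real \<Rightarrow> real" and k t :: real
  assumes der: "\<forall>t\<ge>0. (w has_real_derivative w' t) (at t within {0..})"
    and le: "\<forall>t\<ge>0. w' t \<le> - k * w t"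
    and t: "t \<ge> 0"
  shows "w t \<le> w 0 * exp (- k * t)"
proof -
  define f where "f x = exp (k * x) * w x" for x
  have "f t \<le> f 0"
  proof (cases "t = 0")
    case False
    then have t0: "0 < t" using t by simp
    have fd: "(f has_derivative (*) (exp (k * x) * (k * w x + w' x))) (at x within {0..t})"
      if "0 \<le> x" "x \<le> t" for x
    proof -
      have "(w has_real_derivative w' x) (at x within {0..t})"
        using der that by (auto intro: has_field_derivative_subset)
      then have "(f has_real_derivative (exp (k * x) * (k * w x + w' x))) (at x within {0..t})"
      proof -
        have e: "((\<lambda>x. exp (k * x)) has_real_derivative exp (k * x) * k) (at x within {0..t})"
          using DERIV_chain2[OF DERIV_exp DERIV_cmult[OF DERIV_ident, of k]] by (simp add: has_field_derivative_subset[OF _ subset_UNIV])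
        show ?thesis unfolding f_def
          by (rule DERIV_cong[OF DERIV_mult[OF e \<open>(w has_real_derivative w' x) (at x within {0..t})\<close>]]) (simp add: algebra_simps)
      qed
      then show ?thesis by (simp add: has_field_derivative_def)
    qed
    obtain x where x: "x \<in> {0<..<t}" and eq: "f t - f 0 = (exp (k * x) * (k * w x + w' x)) * (t - 0)"
      using mvt_simple[OF t0 fd] by auto
    have "w' x \<le> - k * w x" using le x by simp
    then have "k * w x + w' x \<le> 0" by simp
    then have e: "exp (k * x) * (k * w x + w' x) \<le> 0"
      by (intro mult_nonneg_nonpos) auto
    have "(exp (k * x) * (k * w x + w' x)) * (t - 0) \<le> 0"
      using mult_nonpos_nonneg[OF e, of "t - 0"] t0 by simp
    then show ?thesis using eq by simp
  qed simp
  then have "exp (k * t) * w t \<le> w 0" by (simp add: f_def)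
  then have "exp (- k * t) * (exp (k * t) * w t) \<le> exp (- k * t) * w 0"
    by (intro mult_left_mono) auto
  moreover have "exp (- k * t) * (exp (k * t) * w t) = w t"
    by (simp add: mult.assoc[symmetric] exp_add[symmetric])
  ultimately have "w t \<le> exp (- k * t) * w 0" by linarith
  then show ?thesis by (simp only: mult.commute)
qed

lemma comp_deriv:
  fixes s :: "real \<Rightarrow> real^'n::finite^'m::finite"
  assumes "(s has_vector_derivative v) F"
  shows "((\<lambda>t. s t $ i $ j) has_real_derivative v $ i $ j) F"
proof -
  have "((\<lambda>t. s t $ i) has_vector_derivative v $ i) F"
    by (rule bounded_linear.has_vector_derivative[OF bounded_linear_vec_nth assms])
  then have "((\<lambda>t. s t $ i $ j) has_vector_derivative v $ i $ j) F"
    by (rule bounded_linear.has_vector_derivative[OF bounded_linear_vec_nth])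
  then show ?thesis by (simp add: has_real_derivative_iff_has_vector_derivative)
qed

lemma Pot_deriv:
  fixes d :: "real^'n::finite" and x :: "real \<Rightarrow> real^'n^'m::finite" and D :: "real^'n^'m"
  assumes d_pos: "\<forall>j. d $ j > 0"
    and der: "\<forall>i j. ((\<lambda>t. x t $ i $ j) has_real_derivative D $ i $ j) (at t0 within X)"
  shows "((\<lambda>t. Pot d (x t)) has_real_derivative (\<Sum>i\<in>UNIV. \<Sum>j\<in>UNIV. gg d (x t0) i j * D$i$j)) (at t0 within X)"
proof -
  have T: "((\<lambda>t. TT (x t) j) has_real_derivative TT D j) (at t0 within X)" for j
    unfolding TT_def by (rule DERIV_sum) (use der in auto)
  have Sq: "((\<lambda>t. (\<Sum>i\<in>UNIV. (x t $i$j)^2)) has_real_derivative (\<Sum>i\<in>UNIV. 2 * x t0 $i$j * D$i$j)) (at t0 within X)" for j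
    by (rule DERIV_sum) (use der in \<open>auto intro!: derivative_eq_intros\<close>)
  have J: "((\<lambda>t. TT (x t) j - ((\<Sum>i\<in>UNIV. (x t $i$j)^2) + (TT (x t) j)^2) / (2 * d$j)) has_real_derivative
      TT D j - ((\<Sum>i\<in>UNIV. 2 * x t0 $i$j * D$i$j) + 2 * TT (x t0) j * TT D j) / (2 * d$j)) (at t0 within X)" for j
  proof -
    have P2: "((\<lambda>t. (TT (x t) j)^2) has_real_derivative 2 * TT (x t0) j * TT D j) (at t0 within X)"
      by (rule DERIV_cong[OF DERIV_power[OF T[of j], of 2]]) simp
    show ?thesis
      by (rule DERIV_diff[OF T DERIV_cdivide[OF DERIV_add[OF Sq P2]]])
  qed
  have "((\<lambda>t. Pot d (x t)) has_real_derivative (\<Sum>j\<in>UNIV. TT D j - ((\<Sum>i\<in>UNIV. 2 * x t0 $i$j * D$i$j) + 2 * TT (x t0) j * TT D j) / (2 * d$j))) (at t0 within X)"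
    unfolding Pot_def by (rule DERIV_sum) (rule J)
  moreover have "(\<Sum>j\<in>UNIV. TT D j - ((\<Sum>i\<in>UNIV. 2 * x t0 $i$j * D$i$j) + 2 * TT (x t0) j * TT D j) / (2 * d$j))
      = (\<Sum>i\<in>UNIV. \<Sum>j\<in>UNIV. gg d (x t0) i j * D$i$j)"
  proof -
    have "(\<Sum>i\<in>UNIV. \<Sum>j\<in>UNIV. gg d (x t0) i j * D$i$j) = (\<Sum>j\<in>UNIV. \<Sum>i\<in>UNIV. gg d (x t0) i j * D$i$j)"
      by (rule sum.swap)
    also have "\<dots> = (\<Sum>j\<in>UNIV. TT D j - ((\<Sum>i\<in>UNIV. 2 * x t0 $i$j * D$i$j) + 2 * TT (x t0) j * TT D j) / (2 * d$j))"
    proof (rule sum.cong[OF refl])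
      fix j
      have dj: "d$j > 0" using d_pos by auto
      have "(\<Sum>i\<in>UNIV. gg d (x t0) i j * D$i$j) = TT D j - (TT (x t0) j * TT D j + (\<Sum>i\<in>UNIV. x t0 $i$j * D$i$j)) / d$j"
      proof -
        have "(\<Sum>i\<in>UNIV. gg d (x t0) i j * D$i$j) = (\<Sum>i\<in>UNIV. D$i$j - (TT (x t0) j * D$i$j + x t0 $i$j * D$i$j) / d$j)"
          by (rule sum.cong[OF refl]) (use dj in \<open>simp add: gg_def field_simps\<close>)
        also have "\<dots> = TT D j - (TT (x t0) j * TT D j + (\<Sum>i\<in>UNIV. x t0 $i$j * D$i$j)) / d$j"
          by (simp only: sum_subtractf sum_divide_distrib[symmetric] sum.distrib sum_distrib_left[symmetric] TT_def[of D])
        finally show ?thesis .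
      qed
      moreover have "(\<Sum>i\<in>UNIV. 2 * x t0 $i$j * D$i$j) = 2 * (\<Sum>i\<in>UNIV. x t0 $i$j * D$i$j)"
        by (simp add: sum_distrib_left mult.assoc)
      ultimately show "(\<Sum>i\<in>UNIV. gg d (x t0) i j * D$i$j) = TT D j - ((\<Sum>i\<in>UNIV. 2 * x t0 $i$j * D$i$j) + 2 * TT (x t0) j * TT D j) / (2 * d$j)"
        using dj by (simp add: field_simps del: sum_distrib_left sum_distrib_right)
    qed
    finally show ?thesis ..
  qed
  ultimately show ?thesis by (rule DERIV_cong)
qed



lemma comp_conv:
  fixes f :: "real \<Rightarrow> real" and l K :: real
  assumes b: "\<forall>t\<ge>0. (f t - l)^2 \<le> K * exp (- (1/8) * t)"
  shows "(f \<longlongrightarrow> l) at_top"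
proof -
  have g: "((\<lambda>t. K * exp (- (1/8) * t)) \<longlongrightarrow> 0) at_top" by real_asymp
  have "((\<lambda>t. (f t - l)^2) \<longlongrightarrow> 0) at_top"
    by (rule tendsto_sandwich[OF _ _ tendsto_const g])
       (use b in \<open>auto simp: eventually_at_top_linorder\<close>)
  then have "((\<lambda>t. sqrt ((f t - l)^2)) \<longlongrightarrow> sqrt 0) at_top" by (rule tendsto_real_sqrt)
  then have "((\<lambda>t. \<bar>f t - l\<bar>) \<longlongrightarrow> 0) at_top" by simp
  then have "((\<lambda>t. f t - l) \<longlongrightarrow> 0) at_top" by (simp only: tendsto_rabs_zero_iff)
  then show ?thesis by (rule LIM_zero_cancel)
qed

lemma lin_BR:
  fixes c :: "real^'m::finite" and d :: "real^'n::finite" and x y xs :: "real^'n^'m"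
  assumes d_pos: "\<forall>j. d $ j > 0" and lt: "rmin < rmax"
    and nx: "is_pure_NE c d rmax rmin xs" and xS: "x \<in> strat_space c"
    and br: "\<forall>i. y $ i \<in> best_resp c d rmax rmin i x"
  shows "lin d x y \<ge> (Pot d xs - Pot d x) / 8"
proof -
  define \<theta> :: real where "\<theta> = 1/4"
  define A where "A i = (\<Sum>j\<in>UNIV. gg d x i j * (xs$i$j - x$i$j))" for i
  define B where "B i = (\<Sum>j\<in>UNIV. (xs$i$j - x$i$j)^2 / d$j)" for i
  have row: "(\<Sum>j\<in>UNIV. gg d x i j * (y$i$j - x$i$j)) \<ge> \<theta> * A i - \<theta>^2 * B i" for i
  proof -
    have xi: "x$i \<in> strat_set c i" using xS by (auto simp: strat_space_def)
    have xsi: "xs$i \<in> strat_set c i" using nx by (auto simp: is_pure_NE_def strat_space_def)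
    have z: "x$i + \<theta> *\<^sub>R (xs$i - x$i) \<in> strat_set c i"
      by (rule strat_set_convex[OF xi xsi]) (auto simp: \<theta>_def)
    have "utility d rmax rmin (replace_strat x i (x$i + \<theta> *\<^sub>R (xs$i - x$i))) i
        \<le> utility d rmax rmin (replace_strat x i (y$i)) i"
      using br z by (auto simp: best_resp_def)
    then have "(rmax - rmin) * phi d x i (x$i + \<theta> *\<^sub>R (xs$i - x$i)) \<le> (rmax - rmin) * phi d x i (y$i)"
      using utility_replace[OF d_pos, of rmax rmin x i "x$i + \<theta> *\<^sub>R (xs$i - x$i)"]
        utility_replace[OF d_pos, of rmax rmin x i "y$i"] by linarith
    then have "phi d x i (x$i + \<theta> *\<^sub>R (xs$i - x$i)) \<le> phi d x i (y$i)"
      using lt by simp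
    moreover have "phi d x i (y$i) \<le> (\<Sum>j\<in>UNIV. gg d x i j * (y$i$j - x$i$j))"
      unfolding phi_def using d_pos by (simp add: sum_nonneg less_imp_le)
    ultimately show ?thesis unfolding phi_comb A_def B_def by simp
  qed
  have "lin d x y \<ge> (\<Sum>i\<in>UNIV. \<theta> * A i - \<theta>^2 * B i)"
    unfolding lin_def by (rule sum_mono) (rule row)
  moreover have "(\<Sum>i\<in>UNIV. \<theta> * A i - \<theta>^2 * B i) = \<theta> * lin d x xs - \<theta>^2 * Qd d x xs"
    unfolding lin_def Qd_def A_def B_def by (simp add: sum_subtractf sum_distrib_left)
  moreover have "lin d x xs \<ge> Pot d xs - Pot d x"
    using Pot_expand[OF d_pos, of xs x] Qd_le_Rd[OF d_pos, of x xs] Qd_nonneg[OF d_pos, of x xs] by linarith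
  moreover have "Pot d xs - Pot d x \<ge> Qd d x xs / 2"
    using Pot_expand[OF d_pos, of x xs] Qd_le_Rd[OF d_pos, of xs x] Qd_sym[of d xs x]
      NE_lin[OF d_pos lt nx xS] by linarith
  ultimately show ?thesis unfolding \<theta>_def by (simp add: power2_eq_square)
qed

theorem theorem4p8:
  fixes c :: "real^'m::finite" and d :: "real^'n::finite" and rmax rmin :: real
    and s shat :: "real \<Rightarrow> real^'n^'m"
  assumes c_pos: "\<forall>i. c $ i > 0"
    and d_pos: "\<forall>j. d $ j > 0"
    and rmin_pos: "0 < rmin" and rmin_lt: "rmin < rmax"
    and init: "s 0 \<in> strat_space c"
    and br: "\<forall>t\<ge>0. \<forall>i. shat t $ i \<in> best_resp c d rmax rmin i (s t)"
    and ode: "\<forall>t\<ge>0. (s has_vector_derivative (shat t - s t)) (at t within {0..})"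
  shows "\<exists>sstar. is_pure_NE c d rmax rmin sstar
           \<and> (\<forall>s'. is_pure_NE c d rmax rmin s' \<longrightarrow> s' = sstar)
           \<and> (s \<longlongrightarrow> sstar) at_top"
proof -
  obtain xs where nx: "is_pure_NE c d rmax rmin xs"
    using NE_exists[OF c_pos d_pos rmin_lt] by blast
  have uniq: "\<forall>s'. is_pure_NE c d rmax rmin s' \<longrightarrow> s' = xs"
    using NE_unique[OF d_pos rmin_lt nx] by blast
  have D: "((\<lambda>t. s t $ i $ j) has_real_derivative (shat t - s t) $ i $ j) (at t within {0..})"
    if "t \<ge> 0" for t i j
    using comp_deriv ode that by blast
  have shS: "shat t $ i \<in> strat_set c i" if "t \<ge> 0" for t i
    using br that by (auto simp: best_resp_def)
  have inv: "s t \<in> strat_space c" if t: "t \<ge> 0" for t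
  proof -
    have nn: "0 \<le> s t $ i $ j" for i j
    proof -
      have "- s t $ i $ j \<le> - s 0 $ i $ j * exp (- 1 * t)"
      proof (rule decay[where w = "\<lambda>t. - s t $ i $ j" and w' = "\<lambda>t. - (shat t - s t) $ i $ j", OF _ _ t])
        show "\<forall>t\<ge>0. ((\<lambda>t. - s t $ i $ j) has_real_derivative - (shat t - s t) $ i $ j) (at t within {0..})"
        proof (intro allI impI)
          fix t :: real assume "t \<ge> 0"
          show "((\<lambda>t. - s t $ i $ j) has_real_derivative - (shat t - s t) $ i $ j) (at t within {0..})"
            by (rule DERIV_minus[OF D[OF \<open>t \<ge> 0\<close>]])
        qed
        show "\<forall>t\<ge>0. - (shat t - s t) $ i $ j \<le> - 1 * - s t $ i $ j"
          using shS by (auto simp: strat_set_def)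
      qed
      moreover have "0 \<le> s 0 $ i $ j" using init by (auto simp: strat_space_def strat_set_def)
      moreover have "0 \<le> s 0 $ i $ j * exp (- 1 * t)"
        using \<open>0 \<le> s 0 $ i $ j\<close> by simp
      ultimately show ?thesis by linarith
    qed
    have sm: "(\<Sum>j\<in>UNIV. s t $ i $ j) \<le> c $ i" for i
    proof -
      have "(\<Sum>j\<in>UNIV. s t $ i $ j) - c$i \<le> ((\<Sum>j\<in>UNIV. s 0 $ i $ j) - c$i) * exp (- 1 * t)"
      proof (rule decay[where w = "\<lambda>t. (\<Sum>j\<in>UNIV. s t $ i $ j) - c$i" and w' = "\<lambda>t. (\<Sum>j\<in>UNIV. (shat t - s t) $ i $ j)", OF _ _ t])
        show "\<forall>t\<ge>0. ((\<lambda>t. (\<Sum>j\<in>UNIV. s t $ i $ j) - c$i) has_real_derivative (\<Sum>j\<in>UNIV. (shat t - s t) $ i $ j)) (at t within {0..})"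
        proof (intro allI impI)
          fix t :: real assume "t \<ge> 0"
          show "((\<lambda>t. (\<Sum>j\<in>UNIV. s t $ i $ j) - c$i) has_real_derivative (\<Sum>j\<in>UNIV. (shat t - s t) $ i $ j)) (at t within {0..})"
            by (rule DERIV_cong[OF DERIV_diff[OF DERIV_sum[OF D[OF \<open>t \<ge> 0\<close>]] DERIV_const]]) simp
        qed
        show "\<forall>t\<ge>0. (\<Sum>j\<in>UNIV. (shat t - s t) $ i $ j) \<le> - 1 * ((\<Sum>j\<in>UNIV. s t $ i $ j) - c$i)"
          using shS by (auto simp: strat_set_def sum_subtractf)
      qed
      moreover have "(\<Sum>j\<in>UNIV. s 0 $ i $ j) - c$i \<le> 0" using init by (auto simp: strat_space_def strat_set_def)
      moreover have "((\<Sum>j\<in>UNIV. s 0 $ i $ j) - c$i) * exp (- 1 * t) \<le> 0"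
        using \<open>(\<Sum>j\<in>UNIV. s 0 $ i $ j) - c$i \<le> 0\<close> by (simp add: mult_nonpos_nonneg)
      ultimately show ?thesis by linarith
    qed
    show ?thesis using nn sm by (auto simp: strat_space_def strat_set_def)
  qed
  define V where "V t = Pot d xs - Pot d (s t)" for t
  have Vb: "V t \<le> V 0 * exp (- (1/8) * t)" if t: "t \<ge> 0" for t
  proof (rule decay[where w = V and w' = "\<lambda>t. - lin d (s t) (shat t)", OF _ _ t])
    show "\<forall>t\<ge>0. (V has_real_derivative - lin d (s t) (shat t)) (at t within {0..})"
    proof (intro allI impI)
      fix t :: real assume t: "t \<ge> 0"
      have "((\<lambda>t. Pot d (s t)) has_real_derivative (\<Sum>i\<in>UNIV. \<Sum>j\<in>UNIV. gg d (s t) i j * (shat t - s t)$i$j)) (at t within {0..})"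
        by (rule Pot_deriv[OF d_pos]) (use D t in blast)
      then have "((\<lambda>t. Pot d (s t)) has_real_derivative lin d (s t) (shat t)) (at t within {0..})"
        by (simp add: lin_def)
      then show "(V has_real_derivative - lin d (s t) (shat t)) (at t within {0..})"
        unfolding V_def[abs_def] by (rule DERIV_cong[OF DERIV_diff[OF DERIV_const]]) simp
    qed
    show "\<forall>t\<ge>0. - lin d (s t) (shat t) \<le> - (1/8) * V t"
      using lin_BR[OF d_pos rmin_lt nx inv] br unfolding V_def by force
  qed
  have conv: "((\<lambda>t. s t $ i $ j) \<longlongrightarrow> xs $ i $ j) at_top" for i j
  proof (rule comp_conv, intro allI impI)
    fix t :: real assume t: "t \<ge> 0"
    have "(s t $ i $ j - xs $ i $ j)^2 \<le> d$j * Qd d xs (s t)" by (rule Qd_comp[OF d_pos])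
    also have "\<dots> \<le> d$j * (2 * V t)"
    proof -
      have "Qd d xs (s t) \<le> 2 * V t"
      proof -
        have "Rd d xs (s t) = 2 * (Pot d xs + lin d xs (s t) - Pot d (s t))"
          using Pot_expand[OF d_pos, of "s t" xs] by simp
        then show ?thesis using Qd_le_Rd[OF d_pos, of xs "s t"]
          NE_lin[OF d_pos rmin_lt nx inv[OF t]] unfolding V_def by simp
      qed
      then show ?thesis using d_pos by (simp add: less_imp_le)
    qed
    also have "\<dots> \<le> d$j * (2 * (V 0 * exp (- (1/8) * t)))"
      using Vb[OF t] d_pos by (simp add: less_imp_le)
    finally show "(s t $ i $ j - xs $ i $ j)^2 \<le> (d$j * 2 * V 0) * exp (- (1/8) * t)"
      by (simp add: mult.assoc)
  qed
  have "(s \<longlongrightarrow> xs) at_top"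
    by (rule vec_tendstoI, rule vec_tendstoI) (rule conv)
  then show ?thesis using nx uniq by blast
qed

end
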